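(* Let $d\ge1$, $n\ge3$, $u\in\mathbb{C}\setminus\{0\}$. In $\mathrm{Y}_{d,n}(u)$: (1) $g_1r_{1,2}=[1+(u-1)e_1]r_{1,2}$; (2) $g_2r_{1,2}=[1+(u-1)e_2]r_{1,2}$; (3) $g_1g_2r_{1,2}=[1+(u-1)e_1+(u-1)e_{1,3}+(u-1)^2e_1e_2]r_{1,2}$; (4) $g_2g_1r_{1,2}=[1+(u-1)e_2+(u-1)e_{1,3}+(u-1)^2e_1e_2]r_{1,2}$; (5) $g_1g_2g_1r_{1,2}=[1+(u-1)(e_1+e_2+e_{1,3})+(u-1)^2(u+2)e_1e_2]r_{1,2}$.
   Context: The Yokonuma–Hecke algebra $\mathrm{Y}_{d,n}(u)$ is the unital associative $\mathbb{C}$-algebra with generators $g_1,\ldots,g_{n-1},t_1,\ldots,t_n$ and relations: $g_ig_j=g_jg_i$ for $|i-j|>1$; $g_{i+1}g_ig_{i+1}=g_ig_{i+1}g_i$; $t_it_j=t_jt_i$; $t_i^d=1$; $g_it_i=t_{i+1}g_i$; $g_it_{i+1}=t_ig_i$; $g_it_j=t_jg_i$ for $j\ne i,i+1$; $g_i^2=1+(u-1)e_i+(u-1)e_ig_i$, where $e_i=\frac1d\sum_{s=0}^{d-1}t_i^st_{i+1}^{d-s}$. Also $e_{i,j}=\frac1d\sum_{s=0}^{d-1}t_i^st_j^{d-s}$. For $w\in S_n$ with reduced expression $s_{i_1}\cdots s_{i_k}$ put $g_w=g_{i_1}\cdots g_{i_k}$; $g_{1,2}=\sum_{w\in S_3}g_w$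 and $r_{1,2}=\sum_{a,b=0}^{d-1}t_1^{a}t_2^{b-a}t_3^{-b}\,g_{1,2}$. *)

theory Defs
  imports Complex_Main
begin

text \<open>A unital associative complex algebra is modelled as a ring 'a together with a
unital ring homomorphism sc from the complex numbers into the centre of 'a.
Since the Yokonuma-Hecke algebra is presented by generators and relations, an
identity holds in it iff it holds for every family of elements of every complex
algebra satisfying the defining relations (universal property).\<close>

definition complex_alg :: "(complex \<Rightarrow> 'a::ring_1) \<Rightarrow> bool" where
  "complex_alg sc \<longleftrightarrow> sc 1 = 1 \<and> (\<forall>a b. sc (a + b) = sc a + sc b)
     \<and> (\<forall>a b. sc (a * b) = sc a * sc b) \<and> (\<forall>a x. sc a * x = x * sc a)"

text \<open>Integer powers of t_i; since t_i^d = 1, t_i^k = t_i^(k mod d).\<close>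
definition tp :: "nat \<Rightarrow> (nat \<Rightarrow> 'a::ring_1) \<Rightarrow> nat \<Rightarrow> int \<Rightarrow> 'a" where
  "tp d t i k = t i ^ nat (k mod int d)"

definition eij :: "nat \<Rightarrow> (complex \<Rightarrow> 'a::ring_1) \<Rightarrow> (nat \<Rightarrow> 'a) \<Rightarrow> nat \<Rightarrow> nat \<Rightarrow> 'a" where
  "eij d sc t i j = sc (1 / of_nat d) * (\<Sum>s<d. t i ^ s * t j ^ (d - s))"

definition YH_rels :: "nat \<Rightarrow> nat \<Rightarrow> complex \<Rightarrow> (complex \<Rightarrow> 'a::ring_1)
    \<Rightarrow> (nat \<Rightarrow> 'a) \<Rightarrow> (nat \<Rightarrow> 'a) \<Rightarrow> bool" where
  "YH_rels d n u sc g t \<longleftrightarrow>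
     complex_alg sc
   \<and> (\<forall>i j. 1 \<le> i \<and> i < n \<and> 1 \<le> j \<and> j < n \<and> (i + 1 < j \<or> j + 1 < i) \<longrightarrow> g i * g j = g j * g i)
   \<and> (\<forall>i. 1 \<le> i \<and> i + 1 < n \<longrightarrow> g (i+1) * g i * g (i+1) = g i * g (i+1) * g i)
   \<and> (\<forall>i j. 1 \<le> i \<and> i \<le> n \<and> 1 \<le> j \<and> j \<le> n \<longrightarrow> t i * t j = t j * t i)
   \<and> (\<forall>i. 1 \<le> i \<and> i \<le> n \<longrightarrow> t i ^ d = 1)
   \<and> (\<forall>i. 1 \<le> i \<and> i < n \<longrightarrow> g i * t i = t (i+1) * g i)
   \<and> (\<forall>i. 1 \<le> i \<and> i < n \<longrightarrow> g i * t (i+1) = t i * g i)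
   \<and> (\<forall>i j. 1 \<le> i \<and> i < n \<and> 1 \<le> j \<and> j \<le> n \<and> j \<noteq> i \<and> j \<noteq> i + 1 \<longrightarrow> g i * t j = t j * g i)
   \<and> (\<forall>i. 1 \<le> i \<and> i < n \<longrightarrow>
        g i * g i = 1 + sc (u - 1) * eij d sc t i (i+1) + sc (u - 1) * eij d sc t i (i+1) * g i)"

text \<open>g_{1,2} = sum of g_w over w in S_3.\<close>
definition g12 :: "(nat \<Rightarrow> 'a::ring_1) \<Rightarrow> 'a" where
  "g12 g = 1 + g 1 + g 2 + g 1 * g 2 + g 2 * g 1 + g 1 * g 2 * g 1"

definition r12 :: "nat \<Rightarrow> (nat \<Rightarrow> 'a::ring_1) \<Rightarrow> (nat \<Rightarrow> 'a) \<Rightarrow> 'a" where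
  "r12 d g t = (\<Sum>a<d. \<Sum>b<d. tp d t 1 (int a) * tp d t 2 (int b - int a) * tp d t 3 (- int b)) * g12 g"

end

theory Submission
  imports Defs
begin


definition pw :: "nat \<Rightarrow> 'a::ring_1 \<Rightarrow> int \<Rightarrow> 'a" where
  "pw d x k = x ^ nat (k mod int d)"

lemma pw_eq: "k mod int d = l mod int d \<Longrightarrow> pw d x k = pw d x l"
  by (simp add: pw_def)

lemma push_pow: fixes a x y :: "'a::ring_1" assumes "a*x = y*a" shows "a*x^m = y^m*a"
proof (induction m)
  case (Suc m)
  have "a*x^Suc m = (a*x^m)*x" by (metis power_Suc2 mult.assoc)
  also have "\<dots> = y^m*(a*x)" using Suc by (simp add: mult.assoc)
  also have "\<dots> = y^Suc m * a" using assms by (metis mult.assoc power_Suc2 power_commutes)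
  finally show ?case .
qed simp

lemma push_pw: fixes a x y :: "'a::ring_1" assumes "a*x = y*a" shows "a*pw d x k = pw d y k*a"
  unfolding pw_def by (rule push_pow[OF assms])

lemma pw_comm: fixes x y :: "'a::ring_1" assumes "x*y = y*x" shows "pw d x k * pw d y l = pw d y l * pw d x k"
  unfolding pw_def by (metis assms power_commuting_commutes power_commutes)

lemma swap12:
  fixes x y z :: "'a::ring_1" assumes "x*y = y*x" and d: "d \<ge> 1"
  shows "(\<Sum>a<d. \<Sum>b<d. pw d x (int a) * pw d y (int b - int a) * pw d z (- int b))
       = (\<Sum>a<d. \<Sum>b<d. pw d y (int a) * pw d x (int b - int a) * pw d z (- int b))"
proof -
  have "(\<Sum>a<d. \<Sum>b<d. pw d x (int a) * pw d y (int b - int a) * pw d z (- int b))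
       = (\<Sum>b<d. \<Sum>a<d. pw d x (int a) * pw d y (int b - int a) * pw d z (- int b))"
    by (rule sum.swap)
  also have "\<dots> = (\<Sum>b<d. \<Sum>a<d. pw d y (int a) * pw d x (int b - int a) * pw d z (- int b))"
  proof (rule sum.cong[OF refl])
    fix b assume b: "b \<in> {..<d}"
    define j where "j a = nat ((int b - int a) mod int d)" for a
    have jd: "j a < d" for a using d unfolding j_def
      by (simp add: nat_less_iff)
    have ji: "a < d \<Longrightarrow> j (j a) = a" for a
    proof -
      assume "a < d"
      have "(int b - (int b - int a) mod int d) mod int d = int a"
        by (subst mod_diff_right_eq) (simp add: \<open>a < d\<close>)
      then show ?thesis using d unfolding j_def by simp
    qed
    have ij: "int (j a) = (int b - int a) mod int d" for a using d unfolding j_def by simp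
    show "(\<Sum>a<d. pw d x (int a) * pw d y (int b - int a) * pw d z (- int b))
        = (\<Sum>a<d. pw d y (int a) * pw d x (int b - int a) * pw d z (- int b))"
    proof (rule sum.reindex_bij_witness[where i=j and j=j])
      show "\<And>a. a \<in> {..<d} \<Longrightarrow> j (j a) = a" using ji by simp
      show "\<And>a. a \<in> {..<d} \<Longrightarrow> j (j a) = a" using ji by simp
      show "\<And>a. a \<in> {..<d} \<Longrightarrow> j a \<in> {..<d}" using jd by simp
      show "\<And>a. a \<in> {..<d} \<Longrightarrow> j a \<in> {..<d}" using jd by simp
      fix a assume a: "a \<in> {..<d}"
      show "pw d y (int (j a)) * pw d x (int b - int (j a)) * pw d z (- int b)
         = pw d x (int a) * pw d y (int b - int a) * pw d z (- int b)"
      proof -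
        have 1: "pw d y (int (j a)) = pw d y (int b - int a)" by (rule pw_eq) (simp add: ij)
        have 2: "pw d x (int b - int (j a)) = pw d x (int a)"
          by (rule pw_eq) (simp add: ij, subst mod_diff_right_eq, simp)
        show ?thesis unfolding 1 2
          by (rule arg_cong[where f="\<lambda>w. w * pw d z (- int b)"], rule pw_comm, rule assms(1)[symmetric])
      qed
    qed
  qed
  also have "\<dots> = (\<Sum>a<d. \<Sum>b<d. pw d y (int a) * pw d x (int b - int a) * pw d z (- int b))"
    by (rule sum.swap)
  finally show ?thesis .
qed

lemma swap23:
  fixes x y z :: "'a::ring_1" assumes "y*z = z*y" and d: "d \<ge> 1"
  shows "(\<Sum>a<d. \<Sum>b<d. pw d x (int a) * pw d y (int b - int a) * pw d z (- int b))
       = (\<Sum>a<d. \<Sum>b<d. pw d x (int a) * pw d z (int b - int a) * pw d y (- int b))"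
proof (rule sum.cong[OF refl])
  fix a assume a: "a \<in> {..<d}"
  define j where "j b = nat ((int a - int b) mod int d)" for b
  have jd: "j b < d" for b using d unfolding j_def by (simp add: nat_less_iff)
  have ji: "b < d \<Longrightarrow> j (j b) = b" for b
  proof -
    assume "b < d"
    have "(int a - (int a - int b) mod int d) mod int d = int b"
      by (subst mod_diff_right_eq) (simp add: \<open>b < d\<close>)
    then show ?thesis using d unfolding j_def by simp
  qed
  have ij: "int (j b) = (int a - int b) mod int d" for b using d unfolding j_def by simp
  show "(\<Sum>b<d. pw d x (int a) * pw d y (int b - int a) * pw d z (- int b))
      = (\<Sum>b<d. pw d x (int a) * pw d z (int b - int a) * pw d y (- int b))"
  proof (rule sum.reindex_bij_witness[where i=j and j=j])
    show "\<And>a. a \<in> {..<d} \<Longrightarrow> j (j a) = a" using ji by simp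
    show "\<And>a. a \<in> {..<d} \<Longrightarrow> j (j a) = a" using ji by simp
    show "\<And>a. a \<in> {..<d} \<Longrightarrow> j a \<in> {..<d}" using jd by simp
    show "\<And>a. a \<in> {..<d} \<Longrightarrow> j a \<in> {..<d}" using jd by simp
    fix b assume b: "b \<in> {..<d}"
    have 1: "pw d z (int (j b) - int a) = pw d z (- int b)"
      by (rule pw_eq) (simp add: ij, subst mod_diff_left_eq, simp)
    have 2: "pw d y (- int (j b)) = pw d y (int b - int a)"
      by (rule pw_eq) (simp add: ij, subst mod_minus_eq, simp)
    show "pw d x (int a) * pw d z (int (j b) - int a) * pw d y (- int (j b))
       = pw d x (int a) * pw d y (int b - int a) * pw d z (- int b)"
      unfolding 1 2 mult.assoc
      by (rule arg_cong[where f="\<lambda>w. pw d x (int a) * w"], rule pw_comm, rule assms(1)[symmetric])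
  qed
qed

definition PP :: "nat \<Rightarrow> 'a::ring_1 \<Rightarrow> 'a \<Rightarrow> 'a" where
  "PP d x y = (\<Sum>s<d. x^s * y^(d-s))"

lemma PP_xy: fixes x y :: "'a::ring_1" assumes xy: "x*y = y*x" and "x^d = 1" "y^d = 1"
  shows "PP d x y * x = PP d x y * y"
proof -
  define f where "f s = x^s * y^(d+1-s)" for s
  have L: "PP d x y * x = (\<Sum>s<d. f (Suc s))" unfolding PP_def sum_distrib_right
  proof (rule sum.cong[OF refl])
    fix s assume "s \<in> {..<d}"
    have "y^(d-s) * x = x * y^(d-s)" using xy by (metis power_commuting_commutes)
    then have "x^s * y^(d-s) * x = x^s * x * y^(d-s)" by (simp add: mult.assoc)
    then show "x^s * y^(d-s) * x = f (Suc s)" unfolding f_def by (simp add: power_commutes)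
  qed
  have R: "PP d x y * y = (\<Sum>s<d. f s)" unfolding PP_def sum_distrib_right
  proof (rule sum.cong[OF refl])
    fix s assume "s \<in> {..<d}"
    then have "d + 1 - s = Suc (d - s)" by simp
    then show "x^s * y^(d-s) * y = f s" unfolding f_def by (simp add: power_commutes mult.assoc)
  qed
  have "(\<Sum>s<Suc d. f s) = f 0 + (\<Sum>s<d. f (Suc s))" by (rule sum.lessThan_Suc_shift)
  moreover have "(\<Sum>s<Suc d. f s) = (\<Sum>s<d. f s) + f d" by simp
  moreover have "f 0 = y" unfolding f_def using assms by simp
  moreover have "f d = y" unfolding f_def using assms by simp
  ultimately have "y + (\<Sum>s<d. f (Suc s)) = y + (\<Sum>s<d. f s)" by (simp add: add.commute)
  then show ?thesis using L R by simp
qed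

lemma PP_xy_pow: fixes x y :: "'a::ring_1" assumes xy: "x*y = y*x" and "x^d = 1" "y^d = 1"
  shows "PP d x y * x^k = PP d x y * y^k"
proof (induction k)
  case (Suc k)
  have "PP d x y * x^Suc k = (PP d x y * x^k) * x" by (simp add: power_commutes mult.assoc)
  also have "\<dots> = PP d x y * (y^k * x)" using Suc by (simp add: mult.assoc)
  also have "\<dots> = PP d x y * (x * y^k)" using xy by (metis power_commuting_commutes)
  also have "\<dots> = (PP d x y * y) * y^k" using PP_xy[OF assms] by (metis mult.assoc)
  also have "\<dots> = PP d x y * y^Suc k" by (simp add: mult.assoc)
  finally show ?case .
qed simp

lemma PP_yx_pow: fixes x y :: "'a::ring_1" assumes xy: "x*y = y*x" and "x^d = 1" "y^d = 1"
  shows "PP d x y * y^k = PP d x y * x^k"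
  using PP_xy_pow[OF assms] by simp


lemma comm_pows: fixes w x y :: "'a::ring_1" assumes "w*x = x*w" "w*y = y*w"
  shows "w * (x^a * y^b) = (x^a * y^b) * w"
proof -
  have 1: "w * x^a = x^a * w" using assms(1) by (metis power_commuting_commutes)
  have 2: "w * y^b = y^b * w" using assms(2) by (metis power_commuting_commutes)
  show ?thesis by (metis 1 2 mult.assoc)
qed

lemma comm_PP: fixes w x y :: "'a::ring_1" assumes "w*x = x*w" "w*y = y*w"
  shows "w * PP d x y = PP d x y * w"
  unfolding PP_def sum_distrib_left sum_distrib_right
  by (rule sum.cong[OF refl], rule comm_pows[OF assms])

lemma PP_a: fixes x y z :: "'a::ring_1" assumes "x*y = y*x" "x^d = 1" "y^d = 1"
  shows "PP d x y * PP d x z = PP d x y * PP d y z"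
proof -
  have "PP d x y * PP d x z = (\<Sum>k<d. (PP d x y * x^k) * z^(d-k))"
    unfolding PP_def[of d x z] sum_distrib_left by (simp add: mult.assoc)
  also have "\<dots> = (\<Sum>k<d. (PP d x y * y^k) * z^(d-k))"
    using PP_xy_pow[OF assms] by simp
  also have "\<dots> = PP d x y * PP d y z"
    unfolding PP_def[of d y z] sum_distrib_left by (simp add: mult.assoc)
  finally show ?thesis .
qed

lemma PP_b: fixes x y z :: "'a::ring_1" assumes "y*z = z*y" "y^d = 1" "z^d = 1" "x*z = z*x" "x*y = y*x"
  shows "PP d y z * PP d x z = PP d y z * PP d x y"
proof -
  have "PP d y z * PP d x z = (\<Sum>k<d. (PP d y z * z^(d-k)) * x^k)"
    unfolding PP_def[of d x z] sum_distrib_left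
  proof (rule sum.cong[OF refl])
    fix k
    have "x^k * z^(d-k) = z^(d-k) * x^k" using assms(4) by (metis power_commuting_commutes power_commutes)
    then show "PP d y z * (x ^ k * z ^ (d - k)) = PP d y z * z ^ (d - k) * x ^ k" by (simp add: mult.assoc)
  qed
  also have "\<dots> = (\<Sum>k<d. (PP d y z * y^(d-k)) * x^k)"
    using PP_yx_pow[OF assms(1-3)] by simp
  also have "\<dots> = PP d y z * PP d x y"
    unfolding PP_def[of d x y] sum_distrib_left
  proof (rule sum.cong[OF refl])
    fix k
    have "x^k * y^(d-k) = y^(d-k) * x^k" using assms(5) by (metis power_commuting_commutes power_commutes)
    then show "PP d y z * y ^ (d - k) * x ^ k = PP d y z * (x ^ k * y ^ (d - k))" by (simp add: mult.assoc)
  qed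
  finally show ?thesis .
qed

lemma PP_c: fixes y z :: "'a::ring_1" assumes "y*z = z*y" "y^d = 1" "z^d = 1"
  shows "PP d y z * PP d y z = of_nat d * PP d y z"
proof -
  have "PP d y z * PP d y z = PP d y z * (\<Sum>k<d. y^k*z^(d-k))"
    by (simp only: PP_def[of d y z, symmetric])
  also have "\<dots> = (\<Sum>k<d. PP d y z)"
    unfolding sum_distrib_left
  proof (rule sum.cong[OF refl])
    fix k assume k: "k \<in> {..<d}"
    have "PP d y z * (y^k * z^(d-k)) = (PP d y z * z^k) * z^(d-k)"
      using PP_xy_pow[OF assms, of k] by (metis mult.assoc)
    also have "\<dots> = PP d y z" using k assms(3) by (simp add: mult.assoc power_add[symmetric])
    finally show "PP d y z * (y^k * z^(d-k)) = PP d y z" .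
  qed
  also have "\<dots> = of_nat d * PP d y z" by simp
  finally show ?thesis .
qed


lemma exp2: fixes c a b :: "'a::ring_1" assumes "a*c = c*a"
  shows "(1+c*a)*(1+c*b) = 1 + c*b + c*a + c*c*(a*b)"
proof -
  have h: "a*(c*b) = c*(a*b)" by (metis assms mult.assoc)
  show ?thesis by (simp add: algebra_simps h)
qed

lemma exp3: fixes c x y z :: "'a::ring_1"
  assumes cx: "x*c = c*x" and cy: "y*c = c*y" and cz: "z*c = c*z" and zz: "z*z = z"
    and xy: "x*y = z*x" and xz: "x*z = z*x" and yz: "y*z = z*x" and xx: "x*x = x"
  shows "(1+c*x)*(1+c*y)*(1+c*z) = 1 + c*(z+x+y) + c*c*(c+3)*z*x"
proof -
  have xyz: "x*(y*z) = z*x" using xy xz xx yz by (metis mult.assoc)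
  have h1: "x*(c*w) = c*(x*w)" for w by (metis cx mult.assoc)
  have h2: "y*(c*w) = c*(y*w)" for w by (metis cy mult.assoc)
  have h3: "x*(y*w) = z*(x*w)" for w by (metis xy mult.assoc)
  have h4: "x*(z*w) = z*(x*w)" for w by (metis xz mult.assoc)
  have h5: "y*(z*w) = z*(x*w)" for w by (metis yz mult.assoc)
  have h6: "z*(c*w) = c*(z*w)" for w by (metis cz mult.assoc)
  have h7: "z*(z*w) = z*w" for w by (metis zz mult.assoc)
  have h8: "(3::'a)*w = w+w+w" for w
  proof -
    have e: "(3::'a) = 1+1+1" by simp
    have "(3::'a)*w = (1+1+1)*w" by (simp only: e)
    also have "\<dots> = w+w+w" by (simp only: distrib_right mult_1_left)
    finally show ?thesis .
  qed
  show ?thesis by (simp add: algebra_simps h1 h2 h3 h4 h5 h6 h7 h8 xy xz yz xyz zz)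
qed


lemma push_PP: fixes a x y x' y' :: "'a::ring_1" assumes "a*x = x'*a" "a*y = y'*a"
  shows "a * PP d x y = PP d x' y' * a"
  unfolding PP_def sum_distrib_left sum_distrib_right
proof (rule sum.cong[OF refl])
  fix s
  have 1: "a*x^s = x'^s*a" by (rule push_pow[OF assms(1)])
  have 2: "a*y^(d-s) = y'^(d-s)*a" by (rule push_pow[OF assms(2)])
  show "a * (x^s * y^(d-s)) = x'^s * y'^(d-s) * a" by (metis 1 2 mult.assoc)
qed

lemma push3: fixes a x y z x' y' z' :: "'a::ring_1" assumes "a*x = x'*a" "a*y = y'*a" "a*z = z'*a"
  shows "a * (pw d x k1 * pw d y k2 * pw d z k3) = pw d x' k1 * pw d y' k2 * pw d z' k3 * a"
  by (metis push_pw[OF assms(1)] push_pw[OF assms(2)] push_pw[OF assms(3)] mult.assoc)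

lemma push_T: fixes a x y z x' y' z' :: "'a::ring_1" assumes "a*x = x'*a" "a*y = y'*a" "a*z = z'*a"
  shows "a * (\<Sum>a<d. \<Sum>b<d. pw d x (int a) * pw d y (int b - int a) * pw d z (- int b))
    = (\<Sum>a<d. \<Sum>b<d. pw d x' (int a) * pw d y' (int b - int a) * pw d z' (- int b)) * a"
  unfolding sum_distrib_left sum_distrib_right
  by (rule sum.cong[OF refl], rule sum.cong[OF refl], rule push3[OF assms])

lemma push1: fixes a c x y :: "'a::ring_1" assumes "a*c = c*a" "a*x = y*a"
  shows "a*(1+c*x) = (1+c*y)*a"
  by (simp add: distrib_left distrib_right) (metis assms mult.assoc)

lemma push_L: fixes a L P P' :: "'a::ring_1" assumes "a*L = L*a" "a*P = P'*a"
  shows "a*(L*P) = (L*P')*a"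
  by (metis assms mult.assoc)




theorem lemma5:
  fixes d n :: nat and u :: complex and sc :: "complex \<Rightarrow> 'a::ring_1"
    and g t :: "nat \<Rightarrow> 'a"
  assumes "d \<ge> 1" and "n \<ge> 3" and "u \<noteq> 0"
    and "YH_rels d n u sc g t"
  defines "e \<equiv> eij d sc t" and "r \<equiv> r12 d g t" and "c \<equiv> sc (u - 1)"
  shows "g 1 * r = (1 + c * e 1 2) * r
    \<and> g 2 * r = (1 + c * e 2 3) * r
    \<and> g 1 * g 2 * r = (1 + c * e 1 2 + c * e 1 3 + c * c * e 1 2 * e 2 3) * r
    \<and> g 2 * g 1 * r = (1 + c * e 2 3 + c * e 1 3 + c * c * e 1 2 * e 2 3) * r
    \<and> g 1 * g 2 * g 1 * r
           = (1 + c * (e 1 2 + e 2 3 + e 1 3) + c * c * sc (u + 2) * e 1 2 * e 2 3) * r"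
proof -
  note Y = assms(4)[unfolded YH_rels_def]
  note Y0 = Y[THEN conjunct1]
  note Y1 = Y[THEN conjunct2, THEN conjunct1]
  note Y2 = Y[THEN conjunct2, THEN conjunct2, THEN conjunct1]
  note Y3 = Y[THEN conjunct2, THEN conjunct2, THEN conjunct2, THEN conjunct1]
  note Y4 = Y[THEN conjunct2, THEN conjunct2, THEN conjunct2, THEN conjunct2, THEN conjunct1]
  note Y5 = Y[THEN conjunct2, THEN conjunct2, THEN conjunct2, THEN conjunct2, THEN conjunct2, THEN conjunct1]
  note Y6 = Y[THEN conjunct2, THEN conjunct2, THEN conjunct2, THEN conjunct2, THEN conjunct2, THEN conjunct2, THEN conjunct1]
  note Y7 = Y[THEN conjunct2, THEN conjunct2, THEN conjunct2, THEN conjunct2, THEN conjunct2, THEN conjunct2, THEN conjunct2, THEN conjunct1]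
  note Y8 = Y[THEN conjunct2, THEN conjunct2, THEN conjunct2, THEN conjunct2, THEN conjunct2, THEN conjunct2, THEN conjunct2, THEN conjunct2]
  have ca: "complex_alg sc" by (rule Y0)
  have sc1: "sc 1 = 1" and scadd: "\<And>a b. sc (a+b) = sc a + sc b"
    and scmul: "\<And>a b. sc (a*b) = sc a * sc b" and cen: "\<And>a x. sc a * x = x * sc a"
    using ca unfolding complex_alg_def by (blast, blast, blast, blast)
  have n3: "n \<ge> 3" by fact
  have tc: "\<And>i j. 1 \<le> i \<Longrightarrow> i \<le> n \<Longrightarrow> 1 \<le> j \<Longrightarrow> j \<le> n \<Longrightarrow> t i * t j = t j * t i"
    using Y3 by blast
  have t12: "t 1 * t 2 = t 2 * t 1" and t13: "t 1 * t 3 = t 3 * t 1" and t23: "t 2 * t 3 = t 3 * t 2"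
    using tc n3 by auto
  have td: "\<And>i. 1 \<le> i \<Longrightarrow> i \<le> n \<Longrightarrow> t i ^ d = 1" using Y4 by blast
  have td1: "t 1 ^ d = 1" and td2: "t 2 ^ d = 1" and td3: "t 3 ^ d = 1" using td n3 by auto
  have gA: "\<And>i. 1 \<le> i \<Longrightarrow> i < n \<Longrightarrow> g i * t i = t (i+1) * g i" using Y5 by blast
  have gB: "\<And>i. 1 \<le> i \<Longrightarrow> i < n \<Longrightarrow> g i * t (i+1) = t i * g i" using Y6 by blast
  have gC: "\<And>i j. 1 \<le> i \<Longrightarrow> i < n \<Longrightarrow> 1 \<le> j \<Longrightarrow> j \<le> n \<Longrightarrow> j \<noteq> i \<Longrightarrow> j \<noteq> i + 1
      \<Longrightarrow> g i * t j = t j * g i" using Y7 by blast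
  have o12: "(1::nat) + 1 = 2" and o23: "(2::nat) + 1 = 3" by simp_all
  have g1t1: "g 1 * t 1 = t 2 * g 1" using gA[of 1, unfolded o12] n3 by simp
  have g1t2: "g 1 * t 2 = t 1 * g 1" using gB[of 1, unfolded o12] n3 by simp
  have g1t3: "g 1 * t 3 = t 3 * g 1" using gC[of 1 3, unfolded o12] n3 by simp
  have g2t2: "g 2 * t 2 = t 3 * g 2" using gA[of 2, unfolded o23] n3 by simp
  have g2t3: "g 2 * t 3 = t 2 * g 2" using gB[of 2, unfolded o23] n3 by simp
  have g2t1: "g 2 * t 1 = t 1 * g 2" using gC[of 2 1, unfolded o23] n3 by simp
  have braid: "g 2 * g 1 * g 2 = g 1 * g 2 * g 1"
  proof -
    have "\<And>i. 1 \<le> i \<Longrightarrow> i + 1 < n \<Longrightarrow> g (i+1) * g i * g (i+1) = g i * g (i+1) * g i"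
      using Y2 by blast
    from this[of 1, unfolded o12] n3 show ?thesis by simp
  qed
  have quad: "\<And>i. 1 \<le> i \<Longrightarrow> i < n \<Longrightarrow>
        g i * g i = 1 + sc (u - 1) * eij d sc t i (i+1) + sc (u - 1) * eij d sc t i (i+1) * g i"
    using Y8 by blast
  have q1: "g 1 * g 1 = 1 + c * e 1 2 + c * e 1 2 * g 1"
    using quad[of 1, unfolded o12] n3 unfolding c_def e_def by simp
  have q2: "g 2 * g 2 = 1 + c * e 2 3 + c * e 2 3 * g 2"
    using quad[of 2, unfolded o23] n3 unfolding c_def e_def by simp
  have d1: "d \<ge> 1" by fact
  define L where "L = sc (1 / of_nat d)"
  have eP: "\<And>i j. e i j = L * PP d (t i) (t j)" unfolding e_def eij_def L_def PP_def by simp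
  define T where "T = (\<Sum>a<d. \<Sum>b<d. pw d (t 1) (int a) * pw d (t 2) (int b - int a) * pw d (t 3) (- int b))"
  define G where "G = g12 g"
  have rT: "r = T * G" unfolding r_def r12_def T_def G_def tp_def pw_def by simp
  have gT1: "g 1 * T = T * g 1"
  proof -
    have "g 1 * T = (\<Sum>a<d. \<Sum>b<d. pw d (t 2) (int a) * pw d (t 1) (int b - int a) * pw d (t 3) (- int b)) * g 1"
      unfolding T_def by (rule push_T[OF g1t1 g1t2 g1t3])
    also have "\<dots> = T * g 1" unfolding T_def by (simp only: swap12[OF t12 d1])
    finally show ?thesis .
  qed
  have gT2: "g 2 * T = T * g 2"
  proof -
    have "g 2 * T = (\<Sum>a<d. \<Sum>b<d. pw d (t 1) (int a) * pw d (t 3) (int b - int a) * pw d (t 2) (- int b)) * g 2"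
      unfolding T_def by (rule push_T[OF g2t1 g2t2 g2t3])
    also have "\<dots> = T * g 2" unfolding T_def by (simp only: swap23[OF t23 d1])
    finally show ?thesis .
  qed
  have tt: "\<And>i j::nat. i \<in> {1,2,3} \<Longrightarrow> j \<in> {1,2,3} \<Longrightarrow> t i * t j = t j * t i"
    using t12 t13 t23 by auto
  have tT: "\<And>i::nat. i \<in> {1,2,3} \<Longrightarrow> t i * T = T * t i"
    unfolding T_def by (rule push_T) (auto intro: tt)
  have tP: "\<And>i j k::nat. i \<in> {1,2,3} \<Longrightarrow> j \<in> {1,2,3} \<Longrightarrow> k \<in> {1,2,3} \<Longrightarrow>
      t k * PP d (t i) (t j) = PP d (t i) (t j) * t k"
    by (rule comm_PP) (auto intro: tt)
  have PPc: "\<And>i j k l::nat. i \<in> {1,2,3} \<Longrightarrow> j \<in> {1,2,3} \<Longrightarrow> k \<in> {1,2,3} \<Longrightarrow> l \<in> {1,2,3} \<Longrightarrow>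
      PP d (t k) (t l) * PP d (t i) (t j) = PP d (t i) (t j) * PP d (t k) (t l)"
    by (rule comm_PP) (auto intro: tP[symmetric])
  have TP: "\<And>i j::nat. i \<in> {1,2,3} \<Longrightarrow> j \<in> {1,2,3} \<Longrightarrow> T * PP d (t i) (t j) = PP d (t i) (t j) * T"
    by (rule comm_PP) (auto intro: tT[symmetric])
  have Lc: "\<And>x. L * x = x * L" unfolding L_def by (rule cen)
  have cc: "\<And>x. c * x = x * c" unfolding c_def by (rule cen)
  have Te: "\<And>i j::nat. i \<in> {1,2,3} \<Longrightarrow> j \<in> {1,2,3} \<Longrightarrow> T * e i j = e i j * T"
    unfolding eP by (metis TP Lc mult.assoc)
  have ee: "\<And>P Q. (L*P)*(L*Q) = L*L*(P*Q)" by (metis Lc mult.assoc)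
  have sc0: "sc 0 = 0" using scadd[of 0 0] by simp
  have scn: "\<And>m. sc (of_nat m) = of_nat m"
  proof -
    fix m show "sc (of_nat m) = of_nat m"
      by (induction m) (simp_all add: sc0 scadd sc1)
  qed
  have Ld: "L * of_nat d = 1"
  proof -
    have "L * of_nat d = sc (1 / of_nat d * of_nat d)" unfolding L_def scmul scn ..
    also have "\<dots> = 1" using d1 sc1 by simp
    finally show ?thesis .
  qed
  have idem: "\<And>i j::nat. i \<in> {1,2,3} \<Longrightarrow> j \<in> {1,2,3} \<Longrightarrow> e i j * e i j = e i j"
  proof -
    fix i j :: nat assume ij: "i \<in> {1,2,3}" "j \<in> {1,2,3}"
    have "e i j * e i j = L*L*(PP d (t i) (t j) * PP d (t i) (t j))" unfolding eP ee ..
    also have "\<dots> = L*L*(of_nat d * PP d (t i) (t j))"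
      using PP_c[of "t i" "t j" d] tt[OF ij] td1 td2 td3 ij by auto
    also have "\<dots> = (L * of_nat d) * (L * PP d (t i) (t j))" by (metis Lc mult.assoc)
    also have "\<dots> = e i j" using Ld eP by simp
    finally show "e i j * e i j = e i j" .
  qed
  have E1: "e 1 3 * e 1 2 = e 1 2 * e 2 3"
  proof -
    have "PP d (t 1) (t 3) * PP d (t 1) (t 2) = PP d (t 1) (t 2) * PP d (t 1) (t 3)" by (rule PPc) auto
    also have "\<dots> = PP d (t 1) (t 2) * PP d (t 2) (t 3)" by (rule PP_a[OF t12 td1 td2])
    finally show ?thesis unfolding eP ee by simp
  qed
  have E4: "e 2 3 * e 1 3 = e 1 2 * e 2 3"
  proof -
    have "PP d (t 2) (t 3) * PP d (t 1) (t 3) = PP d (t 2) (t 3) * PP d (t 1) (t 2)"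
      by (rule PP_b[OF t23 td2 td3 t13 t12])
    also have "\<dots> = PP d (t 1) (t 2) * PP d (t 2) (t 3)" by (rule PPc) auto
    finally show ?thesis unfolding eP ee by simp
  qed
  have E3: "e 2 3 * e 1 2 = e 1 2 * e 2 3"
  proof -
    have "PP d (t 2) (t 3) * PP d (t 1) (t 2) = PP d (t 1) (t 2) * PP d (t 2) (t 3)" by (rule PPc) auto
    then show ?thesis unfolding eP ee by simp
  qed
  have E2: "e 1 3 * e 2 3 = e 1 2 * e 2 3"
  proof -
    have "PP d (t 1) (t 3) * PP d (t 2) (t 3) = PP d (t 2) (t 3) * PP d (t 1) (t 3)" by (rule PPc) auto
    then have "e 1 3 * e 2 3 = e 2 3 * e 1 3" unfolding eP ee by simp
    then show ?thesis using E4 by simp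
  qed
  have ge1: "g 1 * e 2 3 = e 1 3 * g 1"
    unfolding eP by (rule push_L[OF Lc[symmetric] push_PP[OF g1t2 g1t3]])
  have ge2: "g 2 * e 1 2 = e 1 3 * g 2"
    unfolding eP by (rule push_L[OF Lc[symmetric] push_PP[OF g2t1 g2t2]])
  have ge3: "g 1 * e 1 3 = e 2 3 * g 1"
    unfolding eP by (rule push_L[OF Lc[symmetric] push_PP[OF g1t1 g1t3]])
  have GA: "G = (1 + g 1) * (1 + g 2 + g 2 * g 1)"
    unfolding G_def g12_def distrib_left distrib_right mult_1_left mult_1_right mult.assoc
    by (simp only: add_ac)
  have braid': "g 2 * (g 1 * g 2) = g 1 * (g 2 * g 1)" using braid by (simp only: mult.assoc)
  have GB: "G = (1 + g 2) * (1 + g 1 + g 1 * g 2)"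
    unfolding G_def g12_def distrib_left distrib_right mult_1_left mult_1_right mult.assoc braid'
    by (simp only: add_ac)
  have g1G: "g 1 * G = (1 + c * e 1 2) * G"
  proof -
    have h: "g 1 * (1 + g 1) = (1 + c * e 1 2) * (1 + g 1)"
      unfolding distrib_left distrib_right mult_1_left mult_1_right q1 mult.assoc by (simp only: add_ac)
    show ?thesis unfolding GA mult.assoc[symmetric] h ..
  qed
  have g2G: "g 2 * G = (1 + c * e 2 3) * G"
  proof -
    have h: "g 2 * (1 + g 2) = (1 + c * e 2 3) * (1 + g 2)"
      unfolding distrib_left distrib_right mult_1_left mult_1_right q2 mult.assoc by (simp only: add_ac)
    show ?thesis unfolding GB mult.assoc[symmetric] h ..
  qed
  have R1: "g 1 * r = (1 + c * e 1 2) * r"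
  proof -
    have Tc: "T * (1 + c * e 1 2) = (1 + c * e 1 2) * T"
      by (rule push1) (rule cc[symmetric], rule Te, simp_all)
    have "g 1 * r = T * (g 1 * G)" unfolding rT by (metis gT1 mult.assoc)
    also have "\<dots> = (T * (1 + c * e 1 2)) * G" by (simp only: g1G mult.assoc)
    also have "\<dots> = (1 + c * e 1 2) * r" unfolding rT Tc by (simp only: mult.assoc)
    finally show ?thesis .
  qed
  have R2: "g 2 * r = (1 + c * e 2 3) * r"
  proof -
    have Tc: "T * (1 + c * e 2 3) = (1 + c * e 2 3) * T"
      by (rule push1) (rule cc[symmetric], rule Te, simp_all)
    have "g 2 * r = T * (g 2 * G)" unfolding rT by (metis gT2 mult.assoc)
    also have "\<dots> = (T * (1 + c * e 2 3)) * G" by (simp only: g2G mult.assoc)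
    also have "\<dots> = (1 + c * e 2 3) * r" unfolding rT Tc by (simp only: mult.assoc)
    finally show ?thesis .
  qed
  have p1: "g 1 * (1 + c * e 2 3) = (1 + c * e 1 3) * g 1" by (rule push1[OF cc[symmetric] ge1])
  have p2: "g 2 * (1 + c * e 1 2) = (1 + c * e 1 3) * g 2" by (rule push1[OF cc[symmetric] ge2])
  have p3: "g 1 * (1 + c * e 1 3) = (1 + c * e 2 3) * g 1" by (rule push1[OF cc[symmetric] ge3])
  have S3: "g 1 * g 2 * r = (1 + c * e 1 3) * ((1 + c * e 1 2) * r)"
  proof -
    have "g 1 * g 2 * r = g 1 * (g 2 * r)" by (simp only: mult.assoc)
    also have "\<dots> = (g 1 * (1 + c * e 2 3)) * r" by (simp only: R2 mult.assoc)
    also have "\<dots> = (1 + c * e 1 3) * (g 1 * r)" by (simp only: p1 mult.assoc)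
    finally show ?thesis by (simp only: R1)
  qed
  have S4: "g 2 * g 1 * r = (1 + c * e 1 3) * ((1 + c * e 2 3) * r)"
  proof -
    have "g 2 * g 1 * r = g 2 * (g 1 * r)" by (simp only: mult.assoc)
    also have "\<dots> = (g 2 * (1 + c * e 1 2)) * r" by (simp only: R1 mult.assoc)
    also have "\<dots> = (1 + c * e 1 3) * (g 2 * r)" by (simp only: p2 mult.assoc)
    finally show ?thesis by (simp only: R2)
  qed
  have S5: "g 1 * g 2 * g 1 * r = (1 + c * e 2 3) * ((1 + c * e 1 3) * ((1 + c * e 1 2) * r))"
  proof -
    have "g 1 * g 2 * g 1 * r = g 1 * (g 2 * g 1 * r)" by (simp only: mult.assoc)
    also have "\<dots> = (g 1 * (1 + c * e 1 3)) * ((1 + c * e 2 3) * r)" by (simp only: S4[unfolded mult.assoc] mult.assoc)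
    also have "\<dots> = (1 + c * e 2 3) * (g 1 * ((1 + c * e 2 3) * r))" by (simp only: p3 mult.assoc)
    also have "g 1 * ((1 + c * e 2 3) * r) = (1 + c * e 1 3) * ((1 + c * e 1 2) * r)"
      using S3 by (simp only: R2[symmetric] mult.assoc)
    finally show ?thesis .
  qed
  have R3: "g 1 * g 2 * r = (1 + c * e 1 2 + c * e 1 3 + c * c * e 1 2 * e 2 3) * r"
    unfolding S3 mult.assoc[symmetric, of _ _ r] exp2[OF cc[symmetric]] E1 by (simp add: mult.assoc)
  have R4: "g 2 * g 1 * r = (1 + c * e 2 3 + c * e 1 3 + c * c * e 1 2 * e 2 3) * r"
    unfolding S4 mult.assoc[symmetric, of _ _ r] exp2[OF cc[symmetric]] E2 by (simp add: mult.assoc)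
  have u2: "sc (u + 2) = c + 3"
  proof -
    have "sc (u + 2) = sc ((u - 1) + of_nat 3)" by (rule arg_cong[where f=sc]) simp
    also have "\<dots> = c + 3" unfolding scadd scn c_def by simp
    finally show ?thesis .
  qed
  have X: "(1 + c * e 2 3) * (1 + c * e 1 3) * (1 + c * e 1 2)
      = 1 + c * (e 1 2 + e 2 3 + e 1 3) + c * c * (c + 3) * e 1 2 * e 2 3"
  proof -
    have i12: "e 1 2 * e 1 2 = e 1 2" by (rule idem) auto
    have i23: "e 2 3 * e 2 3 = e 2 3" by (rule idem) auto
    show ?thesis by (rule exp3[OF cc[symmetric] cc[symmetric] cc[symmetric] i12 E4 E3 E1 i23])
  qed
  have R5: "g 1 * g 2 * g 1 * r
           = (1 + c * (e 1 2 + e 2 3 + e 1 3) + c * c * sc (u + 2) * e 1 2 * e 2 3) * r"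
    unfolding S5 u2 X[symmetric] by (simp add: mult.assoc)
  show ?thesis using R1 R2 R3 R4 R5 by blast
qed

end
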